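(* Let $\mathbf t=(\bar t_v)_{v\in\mathcal V}\in(\mathbb C^* )^{\mathcal V}$, write $\bar t_{ij}=\bar t_{v_{ij}}$, and define $b(\mathbf t)\in GL_{n+1}(\mathbb C)$ by $$b(\mathbf t)=x_{\mathbf c}\big((\bar t_{h_a}\bar t_{t_a}^{-1})_{a\in\mathcal A}\big)\,\mathrm{diag}(\bar t_{11},\bar t_{22},\dots,\bar t_{n+1,n+1})\,\dot w_0^{-1}\,x_{\mathbf d}\big((-\bar t_{h_a}\bar t_{t_a}^{-1})_{a\in\mathcal A}\big)^{-1}.$$ Then for $k=1,\dots,n$, in $V(\omega_k)=\bigwedge^k\mathbb C^{n+1}$ with highest weight vector $v^+_{\omega_k}=v_1\wedge\dots\wedge v_k$, $$\langle b(\mathbf t)\cdot v^+_{\omega_k},v^+_{\omega_k}\rangle=\Big(\prod_{i=1}^{n+1}\bar t_{ii}\Big)\Big(\prod_{i-j=k}\bar t_{ij}^{-1}\Big).$$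
   Context: $v_1,\dots,v_{n+1}$ is the standard basis of $\mathbb C^{n+1}$; $\langle w,v^+_{\omega_k}\rangle$ denotes the coefficient of $v_1\wedge\dots\wedge v_k$ in $w\in\bigwedge^k\mathbb C^{n+1}$ with respect to the basis of wedges of standard basis vectors. Matrices: $E_{ij}$ elementary matrices, $x_i(s)=\mathbf 1+sE_{i,i+1}$, $\dot s_i=x_i(1)(\mathbf 1-E_{i+1,i})x_i(1)\in SL_{n+1}$, $\dot w_0$ the product of the $\dot s_i$ along a reduced expression of the longest element of $S_{n+1}$. Quiver: vertices $v_{ij}$, $1\le j\le i\le n+1$ (set $\mathcal V$); arrows $c_{ij}$ from $v_{i+1,j}$ to $v_{ij}$ ($1\le j\le i\le n$) and $d_{ij}$ from $v_{ij}$ to $v_{i,j-1}$ ($2\le j\le i\le n+1$), set $\mathcal A$, with $h_a,t_a$ head and tail. For $\sigma\in(\mathbb C^* )^{\mathcal A}$ (or with entries in $\mathbb C$): $x_{\mathbf c}(\sigma)=\prod_{k=1}^{n}\big(\prod_{j=n}^{k}x_j(\sigma_{c_{j,k}})\big)$ (ordered product, $k$ increasing, $j$ decreasing from $n$ to $k$) and $x_{\mathbf d}(\sigma)=\prod_{k=n}^{1}\big(\prod_{j=1}^{k}x_{n-j+1}(\sigma_{d_{k+1,j+1}})\big)$ ($k$ decreasing, $j$ increasing). *)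

theory Defs
  imports "Jordan_Normal_Form.Determinant"
begin

(* All matrices are (n+1) x (n+1) complex matrices; the paper's 1-based
   indices i,j are mapped to the 0-based JNF indices i-1, j-1. *)

definition elem_mat :: "nat \<Rightarrow> nat \<Rightarrow> nat \<Rightarrow> complex mat" where
  "elem_mat N i j = mat N N (\<lambda>(a,b). if a = i - 1 \<and> b = j - 1 then 1 else 0)"

definition xmat :: "nat \<Rightarrow> nat \<Rightarrow> complex \<Rightarrow> complex mat" where
  "xmat N i s = 1\<^sub>m N + s \<cdot>\<^sub>m elem_mat N i (i+1)"

definition sdot :: "nat \<Rightarrow> nat \<Rightarrow> complex mat" where
  "sdot N i = xmat N i 1 * (1\<^sub>m N - elem_mat N (i+1) i) * xmat N i 1"

definition mprod :: "nat \<Rightarrow> complex mat list \<Rightarrow> complex mat" where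
  "mprod N Ms = foldr (*) Ms (1\<^sub>m N)"

(* dot w_0 along the reduced word  s_1 (s_2 s_1) (s_3 s_2 s_1) ... (s_n ... s_1)
   of the longest element of S_{n+1} *)
definition w0dot :: "nat \<Rightarrow> complex mat" where
  "w0dot n = mprod (n+1) (concat (map (\<lambda>m. map (\<lambda>l. sdot (n+1) (m - l)) [0..<m]) [1..<n+1]))"

definition minv :: "nat \<Rightarrow> complex mat \<Rightarrow> complex mat" where
  "minv N A = (THE B. B \<in> carrier_mat N N \<and> A * B = 1\<^sub>m N \<and> B * A = 1\<^sub>m N)"

(* sigma : arrow-labels given as functions of the arrow indices *)
(* x_c(sigma) = prod_{k=1}^{n} prod_{j=n}^{k} x_j(sigma_{c_{j,k}}) *)
definition x_c :: "nat \<Rightarrow> (nat \<Rightarrow> nat \<Rightarrow> complex) \<Rightarrow> complex mat" where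
  "x_c n sc = mprod (n+1) (concat (map (\<lambda>k. map (\<lambda>j. xmat (n+1) j (sc j k)) (rev [k..<n+1])) [1..<n+1]))"

(* x_d(sigma) = prod_{k=n}^{1} prod_{j=1}^{k} x_{n-j+1}(sigma_{d_{k+1,j+1}}) *)
definition x_d :: "nat \<Rightarrow> (nat \<Rightarrow> nat \<Rightarrow> complex) \<Rightarrow> complex mat" where
  "x_d n sd = mprod (n+1) (concat (map (\<lambda>k. map (\<lambda>j. xmat (n+1) (n - j + 1) (sd (k+1) (j+1))) [1..<k+1]) (rev [1..<n+1])))"

(* b(t); t i j = \bar t_{ij}.
   arrow c_{ij}: v_{i+1,j} -> v_{ij}, so t_h/t_t = t_{ij}/t_{i+1,j};
   arrow d_{ij}: v_{ij} -> v_{i,j-1}, so t_h/t_t = t_{i,j-1}/t_{ij}. *)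
definition bmat :: "nat \<Rightarrow> (nat \<Rightarrow> nat \<Rightarrow> complex) \<Rightarrow> complex mat" where
  "bmat n t =
     x_c n (\<lambda>i j. t i j / t (i+1) j)
     * mat (n+1) (n+1) (\<lambda>(a,b). if a = b then t (a+1) (a+1) else 0)
     * minv (n+1) (w0dot n)
     * minv (n+1) (x_d n (\<lambda>i j. - (t i (j-1) / t i j)))"

(* <g . v^+_{omega_k}, v^+_{omega_k}>: coefficient of v_1 \<and> ... \<and> v_k in
   g v_1 \<and> ... \<and> g v_k, i.e. the leading principal k x k minor of g. *)
definition hw_coeff :: "nat \<Rightarrow> complex mat \<Rightarrow> complex" where
  "hw_coeff k g = det (mat k k (\<lambda>(a,b). g $$ (a,b)))"

end

theory Submission
  imports Defs
begin

lemma xmat_carrier[simp]: "xmat N i s \<in> carrier_mat N N"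
  unfolding xmat_def elem_mat_def by auto

lemma xmat_dims[simp]: "dim_row (xmat N i s) = N" "dim_col (xmat N i s) = N"
  unfolding xmat_def elem_mat_def by auto

lemma xmat_idx: "a < N \<Longrightarrow> b < N \<Longrightarrow>
  xmat N i s $$ (a,b) = (if a = b then 1 else 0) + (if a = i-1 \<and> b = i then s else 0)"
  unfolding xmat_def elem_mat_def by auto

lemma mult_idx: "A \<in> carrier_mat N N \<Longrightarrow> B \<in> carrier_mat N N \<Longrightarrow> a < N \<Longrightarrow> b < N \<Longrightarrow>
  (A * B) $$ (a,b) = (\<Sum>l<N. A $$ (a,l) * B $$ (l,b))"
  by (simp add: scalar_prod_def lessThan_atLeast0 row_def col_def)

lemma sum_delta_lt: "(c::nat) < N \<Longrightarrow> (\<Sum>l<N. if l = c then f l else (0::complex)) = f c"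
  by (simp add: sum.delta)

lemma xmat_left:
  assumes M: "M \<in> carrier_mat N N" and i: "1 \<le> i" "i < N"
  shows "xmat N i s * M = mat N N (\<lambda>(a,b). M $$ (a,b) + (if a = i-1 then s * M $$ (i,b) else 0))"
proof (rule eq_matI)
  fix a b assume a: "a < dim_row (mat N N (\<lambda>(a,b). M $$ (a,b) + (if a = i-1 then s * M $$ (i,b) else 0)))"
    and b: "b < dim_col (mat N N (\<lambda>(a,b). M $$ (a,b) + (if a = i-1 then s * M $$ (i,b) else 0)))"
  have aN: "a < N" and bN: "b < N" using a b by auto
  have "(xmat N i s * M) $$ (a,b) = (\<Sum>l<N. xmat N i s $$ (a,l) * M $$ (l,b))"
    by (rule mult_idx[OF _ M aN bN]) simp
  also have "\<dots> = (\<Sum>l<N. (if l = a then M $$ (l,b) else 0) + (if l = i then (if a = i - 1 then s * M $$ (l,b) else 0) else 0))"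
    using i by (intro sum.cong) (auto simp: xmat_idx aN algebra_simps)
  also have "\<dots> = M $$ (a,b) + (if a = i-1 then s * M $$ (i,b) else 0)"
    using aN i by (simp add: sum.distrib sum_delta_lt)
  finally show "(xmat N i s * M) $$ (a,b) = mat N N (\<lambda>(a,b). M $$ (a,b) + (if a = i-1 then s * M $$ (i,b) else 0)) $$ (a,b)"
    using aN bN by simp
qed (use M in auto)

definition uut :: "nat \<Rightarrow> complex mat \<Rightarrow> bool" where
  "uut N U \<longleftrightarrow> U \<in> carrier_mat N N \<and> (\<forall>a<N. \<forall>b<N. b < a \<longrightarrow> U $$ (a,b) = 0) \<and> (\<forall>a<N. U $$ (a,a) = 1)"

lemma uut_one: "uut N (1\<^sub>m N)"
  unfolding uut_def by auto

lemma uut_mult: assumes A: "uut N A" and B: "uut N B" shows "uut N (A * B)"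
proof -
  have cA: "A \<in> carrier_mat N N" and cB: "B \<in> carrier_mat N N" using A B unfolding uut_def by auto
  have l: "(A * B) $$ (a,b) = 0" if "a < N" "b < N" "b < a" for a b
  proof -
    have "(A * B) $$ (a,b) = (\<Sum>l<N. A $$ (a,l) * B $$ (l,b))" by (rule mult_idx[OF cA cB]) (use that in auto)
    also have "\<dots> = (\<Sum>l<N. 0)"
    proof (rule sum.cong)
      fix l assume "l \<in> {..<N}"
      then show "A $$ (a,l) * B $$ (l,b) = 0" using A B that unfolding uut_def
        by (cases "l < a") auto
    qed simp
    finally show ?thesis by simp
  qed
  have d: "(A * B) $$ (a,a) = 1" if "a < N" for a
  proof -
    have "(A * B) $$ (a,a) = (\<Sum>l<N. A $$ (a,l) * B $$ (l,a))" by (rule mult_idx[OF cA cB]) (use that in auto)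
    also have "\<dots> = (\<Sum>l<N. if l = a then 1 else 0)"
    proof (rule sum.cong)
      fix l assume "l \<in> {..<N}"
      then show "A $$ (a,l) * B $$ (l,a) = (if l = a then 1 else 0)" using A B that unfolding uut_def
        by (cases "l < a"; cases "l = a") auto
    qed simp
    finally show ?thesis using that by simp
  qed
  show ?thesis unfolding uut_def using l d cA cB by auto
qed

lemma uut_det: assumes "uut N U" shows "det U = 1"
proof -
  have c: "U \<in> carrier_mat N N" using assms unfolding uut_def by auto
  have "upper_triangular U" using assms c unfolding uut_def upper_triangular_def by auto
  then have "det U = prod_list (diag_mat U)" using det_upper_triangular c by blast
  also have "diag_mat U = map (\<lambda>i. 1) [0..<N]" using assms c unfolding uut_def diag_mat_def by auto
  also have "prod_list \<dots> = 1" by (simp add: map_replicate_const)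
  finally show ?thesis .
qed

lemma uut_xmat: "1 \<le> i \<Longrightarrow> uut N (xmat N i s)"
  unfolding uut_def by (auto simp: xmat_idx)

lemma mprod_Nil[simp]: "mprod N [] = 1\<^sub>m N" unfolding mprod_def by simp
lemma mprod_Cons[simp]: "mprod N (A # As) = A * mprod N As" unfolding mprod_def by simp

lemma mprod_carrier: "(\<And>A. A \<in> set As \<Longrightarrow> A \<in> carrier_mat N N) \<Longrightarrow> mprod N As \<in> carrier_mat N N"
proof (induction As)
  case (Cons A As)
  then have "A \<in> carrier_mat N N" "mprod N As \<in> carrier_mat N N" by auto
  then show ?case by simp
qed simp

lemma mprod_append: "(\<And>A. A \<in> set (As @ Bs) \<Longrightarrow> A \<in> carrier_mat N N) \<Longrightarrow>
  mprod N (As @ Bs) = mprod N As * mprod N Bs"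
proof (induction As)
  case Nil
  then show ?case using mprod_carrier[of Bs N] by simp
next
  case (Cons A As)
  have "mprod N As \<in> carrier_mat N N" "mprod N Bs \<in> carrier_mat N N" "A \<in> carrier_mat N N"
    using Cons.prems by (auto intro!: mprod_carrier)
  then show ?case using Cons assoc_mult_mat[of A N N "mprod N As" N "mprod N Bs" N] by simp
qed

lemma mprod_concat: "(\<And>L A. L \<in> set Ls \<Longrightarrow> A \<in> set L \<Longrightarrow> A \<in> carrier_mat N N) \<Longrightarrow>
  mprod N (concat Ls) = mprod N (map (mprod N) Ls)"
proof (induction Ls)
  case Nil then show ?case by simp
next
  case (Cons L Ls)
  have "mprod N (concat (L # Ls)) = mprod N L * mprod N (concat Ls)"
    using Cons.prems by (subst concat.simps, subst mprod_append) auto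
  moreover have "mprod N (concat Ls) = mprod N (map (mprod N) Ls)"
    using Cons.prems by (intro Cons.IH) auto
  ultimately show ?case by simp
qed

lemma mprod_uut: "(\<And>A. A \<in> set As \<Longrightarrow> uut N A) \<Longrightarrow> uut N (mprod N As)"
  by (induction As) (auto simp: uut_one uut_mult)

lemma mprod_det1: "(\<And>A. A \<in> set As \<Longrightarrow> A \<in> carrier_mat N N \<and> det A = 1) \<Longrightarrow> det (mprod N As) = 1"
proof (induction As)
  case Nil then show ?case by simp
next
  case (Cons A As)
  have "mprod N As \<in> carrier_mat N N" using Cons.prems by (auto intro!: mprod_carrier)
  then show ?case using Cons by (simp add: det_mult[of _ N])
qed

lemma blk_left:
  assumes M: "M \<in> carrier_mat N N" and m: "1 \<le> m"
  shows "h \<le> N \<Longrightarrow> mprod N (map (\<lambda>j. xmat N j (f j)) (rev [m..<h])) * M =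
    mat N N (\<lambda>(a,b). M $$ (a,b) + (if m - 1 \<le> a \<and> a + 1 < h then f (a+1) * M $$ (a+1,b) else 0))"
proof (induction h)
  case 0
  show ?case using M by (intro eq_matI) auto
next
  case (Suc h)
  show ?case
  proof (cases "m \<le> h")
    case False
    then have e: "[m..<Suc h] = []" by simp
    show ?thesis unfolding e using M False by (intro eq_matI) auto
  next
    case True
    then have e: "rev [m..<Suc h] = h # rev [m..<h]" by simp
    define R where "R = mprod N (map (\<lambda>j. xmat N j (f j)) (rev [m..<h]))"
    have R: "R \<in> carrier_mat N N" unfolding R_def by (rule mprod_carrier) auto
    have IH: "R * M = mat N N (\<lambda>(a,b). M $$ (a,b) + (if m - 1 \<le> a \<and> a + 1 < h then f (a+1) * M $$ (a+1,b) else 0))"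
      using Suc by (simp add: R_def)
    have "mprod N (map (\<lambda>j. xmat N j (f j)) (rev [m..<Suc h])) * M = xmat N h (f h) * R * M"
      unfolding e R_def by simp
    also have "\<dots> = xmat N h (f h) * (R * M)"
      by (rule assoc_mult_mat[OF xmat_carrier R M])
    also have "\<dots> = mat N N (\<lambda>(a,b). M $$ (a,b) + (if m - 1 \<le> a \<and> a + 1 < Suc h then f (a+1) * M $$ (a+1,b) else 0))"
      unfolding IH using True m Suc.prems M
      by (subst xmat_left) (auto intro!: eq_matI)
    finally show ?thesis .
  qed
qed

definition blk :: "nat \<Rightarrow> (nat \<Rightarrow> nat \<Rightarrow> complex) \<Rightarrow> nat \<Rightarrow> complex mat" where
  "blk N sc k = mprod N (map (\<lambda>j. xmat N j (sc j k)) (rev [k..<N]))"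

definition Qm :: "nat \<Rightarrow> (nat \<Rightarrow> nat \<Rightarrow> complex) \<Rightarrow> nat \<Rightarrow> complex mat" where
  "Qm N sc m = mprod N (map (blk N sc) [m..<N])"

lemma blk_carrier[simp]: "blk N sc k \<in> carrier_mat N N"
  unfolding blk_def by (rule mprod_carrier) auto

lemma Qm_carrier[simp]: "Qm N sc m \<in> carrier_mat N N"
  unfolding Qm_def by (rule mprod_carrier) auto

lemma blk_uut: "1 \<le> k \<Longrightarrow> uut N (blk N sc k)"
  unfolding blk_def by (rule mprod_uut) (auto intro!: uut_xmat)

lemma Qm_uut: "1 \<le> m \<Longrightarrow> uut N (Qm N sc m)"
  unfolding Qm_def by (rule mprod_uut) (auto intro!: blk_uut)

lemma Qm_step: "m < N \<Longrightarrow> Qm N sc m = blk N sc m * Qm N sc (m+1)"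
  unfolding Qm_def by (simp add: upt_conv_Cons)

lemma x_c_Qm: "x_c n sc = Qm (n+1) sc 1"
  unfolding x_c_def Qm_def blk_def
  by (subst mprod_concat) (auto simp: comp_def)

definition rowid :: "nat \<Rightarrow> nat \<Rightarrow> complex mat \<Rightarrow> bool" where
  "rowid N r U \<longleftrightarrow> U \<in> carrier_mat N N \<and> (\<forall>a<N. \<forall>b<N. a < r \<longrightarrow> U $$ (a,b) = (if a = b then 1 else 0))"

lemma rowid_mult: assumes A: "rowid N r A" and B: "rowid N r B" shows "rowid N r (A * B)"
proof -
  have cA: "A \<in> carrier_mat N N" and cB: "B \<in> carrier_mat N N" using A B unfolding rowid_def by auto
  have "(A * B) $$ (a,b) = (if a = b then 1 else 0)" if "a < N" "b < N" "a < r" for a b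
  proof -
    have "(A * B) $$ (a,b) = (\<Sum>l<N. A $$ (a,l) * B $$ (l,b))" by (rule mult_idx[OF cA cB]) (use that in auto)
    also have "\<dots> = (\<Sum>l<N. if l = a then B $$ (a,b) else 0)"
      by (rule sum.cong) (use A that in \<open>auto simp: rowid_def\<close>)
    also have "\<dots> = B $$ (a,b)" using that by (simp add: sum_delta_lt)
    finally show ?thesis using B that unfolding rowid_def by auto
  qed
  then show ?thesis unfolding rowid_def using cA cB by auto
qed

lemma mprod_rowid: "(\<And>A. A \<in> set As \<Longrightarrow> rowid N r A) \<Longrightarrow> rowid N r (mprod N As)"
proof (induction As)
  case Nil then show ?case unfolding rowid_def by auto
next
  case (Cons A As) then show ?case by (auto intro!: rowid_mult)
qed

lemma rowid_xmat: "r < j \<Longrightarrow> rowid N r (xmat N j s)"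
  unfolding rowid_def by (auto simp: xmat_idx)

lemma Qm_rowid: "rowid N m (Qm N sc (m+1))"
  unfolding Qm_def blk_def
  by (intro mprod_rowid) (auto intro!: mprod_rowid rowid_xmat)

definition cm :: "nat \<Rightarrow> nat \<Rightarrow> complex mat \<Rightarrow> nat \<Rightarrow> complex" where
  "cm N k M r = det (mat k k (\<lambda>(a,b). M $$ (r+a, N-k+b)))"

lemma prod_list_map_upt: "prod_list (map f [0..<k]) = (\<Prod>i<k. (f i :: complex))"
  by (induction k) (auto simp: lessThan_Suc mult.commute)

lemma cm_step:
  assumes m: "1 \<le> m" and mk: "m + k \<le> N" and k1: "1 \<le> k"
  shows "cm N k (Qm N sc m) (m-1) = (\<Prod>i<k. sc (m+i) m) * cm N k (Qm N sc (m+1)) m"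
proof -
  define M where "M = Qm N sc (m+1)"
  have cM: "M \<in> carrier_mat N N" unfolding M_def by simp
  have rid: "rowid N m M" unfolding M_def by (rule Qm_rowid)
  have mN: "m < N" using m mk k1 by auto
  have Q: "Qm N sc m = mat N N (\<lambda>(a,b). M $$ (a,b) + (if m - 1 \<le> a \<and> a + 1 < N then sc (a+1) m * M $$ (a+1,b) else 0))"
    using Qm_step[OF mN, of sc] blk_left[OF cM m, of N "\<lambda>j. sc j m"] unfolding blk_def M_def by simp
  define U where "U = mat k k (\<lambda>(i,j). if j = i then sc (m+i) m else if j+1 = i then 1 else 0)"
  define T where "T = mat k k (\<lambda>(i,b). M $$ (m+i, N-k+b))"
  have cU: "U \<in> carrier_mat k k" and cT: "T \<in> carrier_mat k k" unfolding U_def T_def by auto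
  have eq: "mat k k (\<lambda>(a,b). Qm N sc m $$ (m-1+a, N-k+b)) = U * T"
  proof (rule eq_matI)
    fix i b assume "i < dim_row (U * T)" "b < dim_col (U * T)"
    then have i: "i < k" and b: "b < k" using cU cT by auto
    have "(U*T) $$ (i,b) = (\<Sum>j<k. U $$ (i,j) * T $$ (j,b))" by (rule mult_idx[OF cU cT i b])
    also have "\<dots> = (\<Sum>j<k. (if j = i then sc (m+i) m * T $$ (i,b) else 0) + (if j = i - 1 then (if 1 \<le> i then T $$ (i-1,b) else 0) else 0))"
      using i by (intro sum.cong) (auto simp: U_def)
    also have "\<dots> = sc (m+i) m * T $$ (i,b) + (if 1 \<le> i then T $$ (i-1,b) else 0)"
      using i by (simp add: sum.distrib sum_delta_lt) linarith
    finally have R: "(U*T) $$ (i,b) = sc (m+i) m * T $$ (i,b) + (if 1 \<le> i then T $$ (i-1,b) else 0)" .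
    have r1: "m - 1 + i < N" "m - 1 + i + 1 = m + i" "m + i < N" "N - k + b < N" using i b m mk by auto
    have L: "Qm N sc m $$ (m-1+i, N-k+b) = M $$ (m-1+i, N-k+b) + sc (m+i) m * M $$ (m+i, N-k+b)"
      unfolding Q using r1 m by simp
    have "M $$ (m-1+i, N-k+b) = (if 1 \<le> i then T $$ (i-1,b) else 0)"
    proof (cases "i = 0")
      case True
      then show ?thesis using rid r1 mk m unfolding rowid_def by auto
    next
      case False
      then show ?thesis using i b m unfolding T_def by (simp add: algebra_simps)
    qed
    then show "mat k k (\<lambda>(a,b). Qm N sc m $$ (m-1+a, N-k+b)) $$ (i,b) = (U*T) $$ (i,b)"
      using i b L R unfolding T_def by simp
  qed (use cU cT in auto)
  have dU: "det U = (\<Prod>i<k. sc (m+i) m)"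
  proof -
    have "det U = prod_list (diag_mat U)" by (rule det_lower_triangular[OF _ cU]) (auto simp: U_def)
    also have "diag_mat U = map (\<lambda>i. sc (m+i) m) [0..<k]" unfolding diag_mat_def U_def by auto
    finally show ?thesis by (simp add: prod_list_map_upt)
  qed
  show ?thesis unfolding cm_def eq det_mult[OF cU cT] dU
    by (simp add: T_def M_def)
qed

lemma cm_base: assumes "1 \<le> k" "k \<le> N" shows "cm N k (Qm N sc (N-k+1)) (N-k) = 1"
proof -
  have u: "uut N (Qm N sc (N-k+1))" by (rule Qm_uut) simp
  have "uut k (mat k k (\<lambda>(a,b). Qm N sc (N-k+1) $$ (N-k+a, N-k+b)))"
    using u assms unfolding uut_def by auto
  then show ?thesis unfolding cm_def by (rule uut_det)
qed

lemma cm_closed: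
  assumes k: "1 \<le> k" "k \<le> N"
  shows "m + d = N - k + 1 \<Longrightarrow> 1 \<le> m \<Longrightarrow>
    cm N k (Qm N sc m) (m-1) = (\<Prod>m'\<in>{m..N-k}. \<Prod>i<k. sc (m'+i) m')"
proof (induction d arbitrary: m)
  case 0
  then have "m = N - k + 1" by simp
  then show ?case using cm_base[OF k, of sc] by simp
next
  case (Suc d)
  have mk: "m + k \<le> N" using Suc.prems k by auto
  have "cm N k (Qm N sc m) (m-1) = (\<Prod>i<k. sc (m+i) m) * cm N k (Qm N sc (m+1)) m"
    by (rule cm_step[OF Suc.prems(2) mk k(1)])
  also have "cm N k (Qm N sc (m+1)) m = (\<Prod>m'\<in>{m+1..N-k}. \<Prod>i<k. sc (m'+i) m')"
    using Suc.IH[of "m+1"] Suc.prems by simp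
  also have "(\<Prod>i<k. sc (m+i) m) * \<dots> = (\<Prod>m'\<in>{m..N-k}. \<Prod>i<k. sc (m'+i) m')"
    using mk by (simp add: prod.atLeast_Suc_atMost)
  finally show ?case .
qed

lemma elem_dims[simp]: "dim_row (elem_mat N j i) = N" "dim_col (elem_mat N j i) = N"
  unfolding elem_mat_def by auto

lemma LE_carrier[simp]: "1\<^sub>m N - elem_mat N j i \<in> carrier_mat N N"
  unfolding elem_mat_def by auto

lemma LE_left:
  assumes M: "M \<in> carrier_mat N N" and i: "1 \<le> i" "i < N"
  shows "(1\<^sub>m N - elem_mat N (i+1) i) * M = mat N N (\<lambda>(a,b). M $$ (a,b) - (if a = i then M $$ (i-1,b) else 0))"
proof (rule eq_matI)
  fix a b assume "a < dim_row (mat N N (\<lambda>(a,b). M $$ (a,b) - (if a = i then M $$ (i-1,b) else 0)))"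
    "b < dim_col (mat N N (\<lambda>(a,b). M $$ (a,b) - (if a = i then M $$ (i-1,b) else 0)))"
  then have aN: "a < N" and bN: "b < N" by auto
  have "((1\<^sub>m N - elem_mat N (i+1) i) * M) $$ (a,b) = (\<Sum>l<N. (1\<^sub>m N - elem_mat N (i+1) i) $$ (a,l) * M $$ (l,b))"
    by (rule mult_idx[OF _ M aN bN]) simp
  also have "\<dots> = (\<Sum>l<N. (if l = a then M $$ (l,b) else 0) - (if l = i - 1 then (if a = i then M $$ (l,b) else 0) else 0))"
    using i aN by (intro sum.cong) (auto simp: elem_mat_def algebra_simps)
  also have "\<dots> = M $$ (a,b) - (if a = i then M $$ (i-1,b) else 0)"
    using aN i by (simp add: sum_subtractf sum_delta_lt) linarith
  finally show "((1\<^sub>m N - elem_mat N (i+1) i) * M) $$ (a,b) = mat N N (\<lambda>(a,b). M $$ (a,b) - (if a = i then M $$ (i-1,b) else 0)) $$ (a,b)"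
    using aN bN by simp
qed (use M in auto)

lemma sdot_carrier[simp]: "sdot N i \<in> carrier_mat N N"
  unfolding sdot_def by (auto intro!: mult_carrier_mat)

lemma sdot_left:
  assumes M: "M \<in> carrier_mat N N" and i: "1 \<le> i" "i < N"
  shows "sdot N i * M = mat N N (\<lambda>(a,b). if a = i-1 then M $$ (i,b) else if a = i then - M $$ (i-1,b) else M $$ (a,b))"
proof -
  let ?X = "xmat N i 1" and ?L = "1\<^sub>m N - elem_mat N (i+1) i"
  have "sdot N i * M = ?X * (?L * (?X * M))"
    unfolding sdot_def
    using assoc_mult_mat[OF mult_carrier_mat[OF xmat_carrier LE_carrier] xmat_carrier M]
      assoc_mult_mat[OF xmat_carrier LE_carrier mult_carrier_mat[OF xmat_carrier M]]
    by simp
  also have "?X * M = mat N N (\<lambda>(a,b). M $$ (a,b) + (if a = i-1 then 1 * M $$ (i,b) else 0))"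
    by (rule xmat_left[OF M i])
  also have "?L * \<dots> = mat N N (\<lambda>(a,b). (M $$ (a,b) + (if a = i-1 then 1 * M $$ (i,b) else 0))
      - (if a = i then M $$ (i-1,b) + M $$ (i,b) else 0))"
    using i by (subst LE_left) (auto intro!: eq_matI)
  also have "?X * \<dots> = mat N N (\<lambda>(a,b). if a = i-1 then M $$ (i,b) else if a = i then - M $$ (i-1,b) else M $$ (a,b))"
    using i by (subst xmat_left) (auto intro!: eq_matI)
  finally show ?thesis .
qed

lemma det_sdot: "1 \<le> i \<Longrightarrow> det (sdot N i) = 1"
proof -
  assume i: "1 \<le> i"
  have dX: "det (xmat N i 1) = 1" by (rule uut_det[OF uut_xmat[OF i]])
  have "det (1\<^sub>m N - elem_mat N (i+1) i) = prod_list (diag_mat (1\<^sub>m N - elem_mat N (i+1) i))"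
    by (rule det_lower_triangular[OF _ LE_carrier]) (auto simp: elem_mat_def)
  also have "diag_mat (1\<^sub>m N - elem_mat N (i+1) i) = map (\<lambda>_. 1) [0..<N]"
    using i unfolding diag_mat_def elem_mat_def by auto
  finally have dL: "det (1\<^sub>m N - elem_mat N (i+1) i) = 1" by (simp add: map_replicate_const)
  show ?thesis unfolding sdot_def
    by (simp add: det_mult[OF mult_carrier_mat[OF xmat_carrier LE_carrier] xmat_carrier]
      det_mult[OF xmat_carrier LE_carrier] dX dL[simplified])
qed

definition Cm :: "nat \<Rightarrow> nat \<Rightarrow> complex mat" where
  "Cm N m = mprod N (map (\<lambda>l. sdot N (m - l)) [0..<m])"

lemma Cm_carrier[simp]: "Cm N m \<in> carrier_mat N N"
  unfolding Cm_def by (rule mprod_carrier) auto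

definition cf :: "nat \<Rightarrow> nat \<Rightarrow> nat \<Rightarrow> complex" where
  "cf m a b = (if b = 0 then (if a = m then (-1)^m else 0)
   else if b \<le> m then (if a = b - 1 then 1 else 0) else (if a = b then 1 else 0))"

lemma cf_Suc: "cf (Suc m) a b = (if a = m then cf m (Suc m) b else if a = Suc m then - cf m m b else cf m a b)"
proof (cases "b = 0")
  case True then show ?thesis unfolding cf_def by auto
next
  case b: False
  show ?thesis
  proof (cases "b \<le> m")
    case True then show ?thesis using b unfolding cf_def by auto
  next
    case False
    then show ?thesis using b unfolding cf_def by (cases "b = Suc m") auto
  qed
qed

lemma Cm_formula: "m < N \<Longrightarrow> Cm N m = mat N N (\<lambda>(a,b). cf m a b)"
proof (induction m)
  case 0
  then show ?case unfolding Cm_def by (auto intro!: eq_matI simp: cf_def)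
next
  case (Suc m)
  have e: "Cm N (Suc m) = sdot N (Suc m) * Cm N m"
    unfolding Cm_def by (simp add: upt_conv_Cons map_Suc_upt[symmetric] comp_def del: upt_Suc)
  show ?case unfolding e Suc.IH[OF Suc_lessD[OF Suc.prems]] using Suc.prems
    by (subst sdot_left) (auto intro!: eq_matI simp: cf_Suc simp del: cf_def)
qed

lemma cf_alt: "cf m l b = (if l = (if b = 0 then m else if b \<le> m then b - 1 else b) then (if b = 0 then (-1)^m else 1) else 0)"
  unfolding cf_def by auto

lemma Cm_dims[simp]: "dim_row (Cm N m) = N" "dim_col (Cm N m) = N"
  using Cm_carrier[of N m] unfolding carrier_mat_def by blast+

lemma Cm_right:
  assumes M: "M \<in> carrier_mat N N" and m: "m < N"
  shows "M * Cm N m = mat N N (\<lambda>(a,b). (if b = 0 then (-1)^m else 1) * M $$ (a, if b = 0 then m else if b \<le> m then b - 1 else b))"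
proof (rule eq_matI)
  fix a b assume "a < dim_row (mat N N (\<lambda>(a,b). (if b = 0 then (-1)^m else 1) * M $$ (a, if b = 0 then m else if b \<le> m then b - 1 else b)))"
    "b < dim_col (mat N N (\<lambda>(a,b). (if b = 0 then (-1)^m else 1) * M $$ (a, if b = 0 then m else if b \<le> m then b - 1 else b)))"
  then have aN: "a < N" and bN: "b < N" by auto
  define g where "g = (if b = 0 then m else if b \<le> m then b - 1 else b)"
  define h :: complex where "h = (if b = 0 then (-1)^m else 1)"
  have gN: "g < N" unfolding g_def using m bN by auto
  have "(M * Cm N m) $$ (a,b) = (\<Sum>l<N. M $$ (a,l) * Cm N m $$ (l,b))"
    by (rule mult_idx[OF M _ aN bN]) simp
  also have "\<dots> = (\<Sum>l<N. if l = g then h * M $$ (a,l) else 0)"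
    by (intro sum.cong) (auto simp: Cm_formula[OF m] bN cf_alt g_def h_def simp del: cf_def)
  also have "\<dots> = h * M $$ (a,g)" using gN by (simp add: sum_delta_lt)
  finally show "(M * Cm N m) $$ (a,b) = mat N N (\<lambda>(a,b). (if b = 0 then (-1)^m else 1) * M $$ (a, if b = 0 then m else if b \<le> m then b - 1 else b)) $$ (a,b)"
    using aN bN by (simp add: g_def h_def)
qed (use M in auto)

definition Wm :: "nat \<Rightarrow> nat \<Rightarrow> complex mat" where
  "Wm N m = mprod N (map (Cm N) [1..<m+1])"

lemma w0dot_Wm: "w0dot n = Wm (n+1) n"
  unfolding w0dot_def Wm_def Cm_def by (subst mprod_concat) (auto simp: comp_def)

lemma Wm_carrier[simp]: "Wm N m \<in> carrier_mat N N"
  unfolding Wm_def by (rule mprod_carrier) auto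

lemma Wm_Suc: "Wm N (Suc m) = Wm N m * Cm N (Suc m)"
proof -
  have "[1..<Suc m + 1] = [1..<m+1] @ [Suc m]" by simp
  then have "Wm N (Suc m) = mprod N (map (Cm N) [1..<m+1]) * mprod N [Cm N (Suc m)]"
    unfolding Wm_def by (simp only: map_append, subst mprod_append) auto
  then show ?thesis unfolding Wm_def by simp
qed

definition wf :: "nat \<Rightarrow> nat \<Rightarrow> nat \<Rightarrow> complex" where
  "wf m a b = (if a \<le> m \<and> b \<le> m then (if a + b = m then (-1)^a else 0) else (if a = b then 1 else 0))"

lemma wf_step: "wf (Suc m) a b = (if b = 0 then (-1)^(Suc m) else 1) * wf m a (if b = 0 then Suc m else if b \<le> Suc m then b - 1 else b)"
proof (cases "b = 0")
  case True then show ?thesis unfolding wf_def by auto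
next
  case b: False
  show ?thesis
  proof (cases "b \<le> Suc m")
    case True then show ?thesis using b unfolding wf_def by (cases "a \<le> m"; cases "a = Suc m") auto
  next
    case False
    then show ?thesis using b unfolding wf_def by auto
  qed
qed

lemma Wm_formula: "m < N \<Longrightarrow> Wm N m = mat N N (\<lambda>(a,b). wf m a b)"
proof (induction m)
  case 0
  then show ?case unfolding Wm_def by (auto intro!: eq_matI simp: wf_def)
next
  case (Suc m)
  show ?case unfolding Wm_Suc using Suc
    by (subst Cm_right) (auto intro!: eq_matI simp: wf_step simp del: wf_def)
qed

lemma det_Cm: "det (Cm N m) = 1"
  unfolding Cm_def by (rule mprod_det1) (auto intro!: det_sdot)

lemma det_Wm: "det (Wm N m) = 1"
  unfolding Wm_def by (rule mprod_det1) (auto simp: det_Cm)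

lemma minv_eq:
  assumes A: "A \<in> carrier_mat N N" and B: "B \<in> carrier_mat N N" and AB: "A * B = 1\<^sub>m N" and BA: "B * A = 1\<^sub>m N"
  shows "minv N A = B"
  unfolding minv_def
proof (rule the_equality)
  show "B \<in> carrier_mat N N \<and> A * B = 1\<^sub>m N \<and> B * A = 1\<^sub>m N" using B AB BA by auto
next
  fix C assume C: "C \<in> carrier_mat N N \<and> A * C = 1\<^sub>m N \<and> C * A = 1\<^sub>m N"
  have cC: "C \<in> carrier_mat N N" using C by blast
  have "C = C * (A * B)" using right_mult_one_mat[OF cC] AB by simp
  also have "\<dots> = (C * A) * B" using assoc_mult_mat[OF cC A B] by simp
  also have "\<dots> = B" using C B by (simp add: left_mult_one_mat)
  finally show "C = B" .
qed

lemma uut_inverse: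
  assumes U: "uut N X"
  shows "minv N X \<in> carrier_mat N N \<and> minv N X * X = 1\<^sub>m N"
proof -
  have cX: "X \<in> carrier_mat N N" using U unfolding uut_def by auto
  have "X \<in> Units (ring_mat TYPE(complex) N ())"
    by (rule det_non_zero_imp_unit[OF cX]) (simp add: uut_det[OF U])
  then obtain B where B: "B \<in> carrier_mat N N" "B * X = 1\<^sub>m N" "X * B = 1\<^sub>m N"
    unfolding Units_def by (auto simp: ring_mat_simps)
  then show ?thesis using minv_eq[OF cX B(1) B(3) B(2)] by simp
qed

lemma hw_uut:
  assumes A: "A \<in> carrier_mat N N" and U: "uut N U" and k: "k \<le> N"
  shows "hw_coeff k (A * U) = hw_coeff k A"
proof -
  have cU: "U \<in> carrier_mat N N" using U unfolding uut_def by auto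
  define Ak where "Ak = mat k k (\<lambda>(a,b). A $$ (a,b))"
  define Uk where "Uk = mat k k (\<lambda>(a,b). U $$ (a,b))"
  have cAk: "Ak \<in> carrier_mat k k" and cUk: "Uk \<in> carrier_mat k k" unfolding Ak_def Uk_def by auto
  have "uut k Uk" using U k unfolding uut_def Uk_def by auto
  then have dU: "det Uk = 1" by (rule uut_det)
  have "mat k k (\<lambda>(a,b). (A * U) $$ (a,b)) = Ak * Uk"
  proof (rule eq_matI)
    fix a b assume "a < dim_row (Ak * Uk)" "b < dim_col (Ak * Uk)"
    then have a: "a < k" and b: "b < k" using cAk cUk by auto
    have "(A * U) $$ (a,b) = (\<Sum>l<N. A $$ (a,l) * U $$ (l,b))"
      by (rule mult_idx[OF A cU]) (use a b k in auto)
    also have "\<dots> = (\<Sum>l<k. A $$ (a,l) * U $$ (l,b))"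
      by (rule sum.mono_neutral_right) (use U a b k in \<open>auto simp: uut_def\<close>)
    also have "\<dots> = (Ak * Uk) $$ (a,b)"
      by (subst mult_idx[OF cAk cUk a b]) (use a b in \<open>auto simp: Ak_def Uk_def intro!: sum.cong\<close>)
    finally show "mat k k (\<lambda>(a,b). (A * U) $$ (a,b)) $$ (a,b) = (Ak * Uk) $$ (a,b)" using a b by simp
  qed (use cAk cUk in auto)
  then show ?thesis unfolding hw_coeff_def using det_mult[OF cAk cUk] dU Ak_def by simp
qed

lemma neg1_sq: "((-1::complex)^a) * (-1)^a = 1" by (induction a) auto

definition Pn :: "nat \<Rightarrow> complex mat" where
  "Pn n = mat (n+1) (n+1) (\<lambda>(a,b). if a + b = n then (-1)^b else 0)"

lemma minv_w0: "minv (n+1) (w0dot n) = Pn n"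
proof -
  let ?N = "n+1"
  have W: "w0dot n = mat ?N ?N (\<lambda>(a,b). wf n a b)" unfolding w0dot_Wm by (rule Wm_formula) simp
  have cW: "w0dot n \<in> carrier_mat ?N ?N" unfolding W by simp
  have cP: "Pn n \<in> carrier_mat ?N ?N" unfolding Pn_def by simp
  have WP: "w0dot n * Pn n = 1\<^sub>m ?N"
  proof (rule eq_matI)
    fix a c assume "a < dim_row (1\<^sub>m ?N)" "c < dim_col (1\<^sub>m ?N)"
    then have a: "a < ?N" and c: "c < ?N" by auto
    have "(w0dot n * Pn n) $$ (a,c) = (\<Sum>l<?N. w0dot n $$ (a,l) * Pn n $$ (l,c))" by (rule mult_idx[OF cW cP a c])
    also have "\<dots> = (\<Sum>l<?N. if l = n - a then (-1)^a * Pn n $$ (l,c) else 0)"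
      using a by (intro sum.cong) (auto simp: W wf_def)
    also have "\<dots> = (-1)^a * Pn n $$ (n-a,c)" using a by (simp add: sum_delta_lt)
    also have "\<dots> = (if a = c then 1 else 0)" using a c by (auto simp: Pn_def neg1_sq)
    finally show "(w0dot n * Pn n) $$ (a,c) = 1\<^sub>m ?N $$ (a,c)" using a c by simp
  qed (use cW cP in auto)
  have PW: "Pn n * w0dot n = 1\<^sub>m ?N"
  proof (rule eq_matI)
    fix a c assume "a < dim_row (1\<^sub>m ?N)" "c < dim_col (1\<^sub>m ?N)"
    then have a: "a < ?N" and c: "c < ?N" by auto
    have "(Pn n * w0dot n) $$ (a,c) = (\<Sum>l<?N. Pn n $$ (a,l) * w0dot n $$ (l,c))" by (rule mult_idx[OF cP cW a c])
    also have "\<dots> = (\<Sum>l<?N. if l = n - a then (-1)^l * w0dot n $$ (l,c) else 0)"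
      using a by (intro sum.cong) (auto simp: Pn_def)
    also have "\<dots> = (-1)^(n-a) * w0dot n $$ (n-a,c)" using a by (simp add: sum_delta_lt)
    also have "\<dots> = (if a = c then 1 else 0)" using a c by (auto simp: W wf_def neg1_sq)
    finally show "(Pn n * w0dot n) $$ (a,c) = 1\<^sub>m ?N $$ (a,c)" using a c by simp
  qed (use cW cP in auto)
  show ?thesis by (rule minv_eq[OF cW cP WP PW])
qed

lemma telescope:
  fixes k m :: nat
  assumes nz: "\<And>i. i < k \<Longrightarrow> t (m+i) m \<noteq> (0::complex)" and z: "t m m \<noteq> 0"
  shows "(\<Prod>i<k. t (m+i) m / t (m+i+1) m) = t m m / t (m+k) m"
  using nz
proof (induction k)
  case 0
  then show ?case using z by auto
next
  case (Suc k)
  have "t (m+k) m \<noteq> 0" using Suc.prems by simp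
  then show ?case using Suc by (simp add: field_simps)
qed

lemma prod_shift: "(\<Prod>c<(k::nat). f (c + s)) = (\<Prod>i\<in>{s..<s+k}. (f i :: complex))"
  by (induction k) (auto simp: lessThan_Suc mult.commute add.commute)

theorem lemma9p3:
  fixes n k :: nat and t :: "nat \<Rightarrow> nat \<Rightarrow> complex"
  assumes "\<And>i j. 1 \<le> j \<Longrightarrow> j \<le> i \<Longrightarrow> i \<le> n + 1 \<Longrightarrow> t i j \<noteq> 0"
    and "1 \<le> k" and "k \<le> n"
  shows "hw_coeff k (bmat n t) =
    (\<Prod>i\<in>{1..n+1}. t i i) *
    (\<Prod>(i,j)\<in>{(i,j). 1 \<le> j \<and> j \<le> i \<and> i \<le> n + 1 \<and> i - j = k}. inverse (t i j))"
proof -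
  note nz = assms(1)
  have k1: "1 \<le> k" and kn: "k \<le> n" using assms by auto
  define N where "N = n + 1"
  define sc where "sc = (\<lambda>i j. t i j / t (i+1) j)"
  define xc where "xc = x_c n sc"
  define D :: "complex mat" where "D = mat (n+1) (n+1) (\<lambda>(a,b). if a = b then t (a+1) (a+1) else 0)"
  define X where "X = x_d n (\<lambda>i j. - (t i (j-1) / t i j))"
  define Y where "Y = minv (n+1) X"
  have cxc: "xc \<in> carrier_mat N N" unfolding xc_def x_c_Qm N_def by simp
  have cD: "D \<in> carrier_mat N N" unfolding D_def N_def by simp
  have cP: "Pn n \<in> carrier_mat N N" unfolding Pn_def N_def by simp
  have uX: "uut N X" unfolding X_def x_d_def N_def
    by (rule mprod_uut) (auto intro!: uut_xmat)
  have cX: "X \<in> carrier_mat N N" using uX unfolding uut_def by auto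
  have Yinv: "Y \<in> carrier_mat N N" "Y * X = 1\<^sub>m N" using uut_inverse[OF uX] unfolding Y_def N_def by auto
  define A where "A = xc * D * Pn n"
  have cA: "A \<in> carrier_mat N N" unfolding A_def using cxc cD cP by auto
  have b: "bmat n t = A * Y"
    unfolding bmat_def A_def Y_def X_def xc_def sc_def D_def minv_w0 ..
  have kN: "k \<le> N" using kn unfolding N_def by simp
  have step1: "hw_coeff k (bmat n t) = hw_coeff k A"
  proof -
    have "hw_coeff k A = hw_coeff k ((A * Y) * X)"
      using assoc_mult_mat[OF cA Yinv(1) cX] Yinv(2) right_mult_one_mat[OF cA] by simp
    also have "\<dots> = hw_coeff k (A * Y)" by (rule hw_uut[OF _ uX kN]) (use cA Yinv in auto)
    finally show ?thesis unfolding b by simp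
  qed
  define DP where "DP = mat N N (\<lambda>(l,b). if l + b = n then t (l+1) (l+1) * (-1)^b else 0)"
  have cDP: "DP \<in> carrier_mat N N" unfolding DP_def by simp
  have DPe: "D * Pn n = DP"
  proof (rule eq_matI)
    fix a b assume "a < dim_row DP" "b < dim_col DP"
    then have a: "a < N" and b: "b < N" unfolding DP_def by auto
    have "(D * Pn n) $$ (a,b) = (\<Sum>l<N. D $$ (a,l) * Pn n $$ (l,b))" by (rule mult_idx[OF cD cP a b])
    also have "\<dots> = (\<Sum>l<N. if l = a then t (a+1) (a+1) * Pn n $$ (l,b) else 0)"
      using a by (intro sum.cong) (auto simp: D_def N_def)
    also have "\<dots> = DP $$ (a,b)" using a b by (simp add: sum_delta_lt DP_def Pn_def N_def)
    finally show "(D * Pn n) $$ (a,b) = DP $$ (a,b)" .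
  qed (use cD cP cDP in auto)
  have Ae: "A = xc * DP" unfolding A_def DPe[symmetric] by (rule assoc_mult_mat[OF cxc cD cP])
  have Aidx: "A $$ (a,b) = xc $$ (a, n-b) * (t (n-b+1) (n-b+1) * (-1)^b)" if a: "a < N" and b: "b < N" for a b
  proof -
    have "A $$ (a,b) = (\<Sum>l<N. xc $$ (a,l) * DP $$ (l,b))" unfolding Ae by (rule mult_idx[OF cxc cDP a b])
    also have "\<dots> = (\<Sum>l<N. if l = n - b then xc $$ (a,l) * (t (l+1) (l+1) * (-1)^b) else 0)"
      using b by (intro sum.cong) (auto simp: DP_def N_def)
    also have "\<dots> = xc $$ (a, n-b) * (t (n-b+1) (n-b+1) * (-1)^b)" using b by (simp add: sum_delta_lt N_def)
    finally show ?thesis .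
  qed
  define Z where "Z = mat k k (\<lambda>(a,c). xc $$ (0 + a, N-k+c))"
  define Dk where "Dk = mat k k (\<lambda>(a,c). if a = c then t (N-k+c+1) (N-k+c+1) else 0)"
  define Rk :: "complex mat" where "Rk = mat k k (\<lambda>(c,b). if c + b = k - 1 then (-1)^b else 0)"
  have cZ: "Z \<in> carrier_mat k k" and cDk: "Dk \<in> carrier_mat k k" and cRk: "Rk \<in> carrier_mat k k"
    unfolding Z_def Dk_def Rk_def by auto
  define ZD where "ZD = mat k k (\<lambda>(a,c). xc $$ (a, N-k+c) * t (N-k+c+1) (N-k+c+1))"
  have cZD: "ZD \<in> carrier_mat k k" unfolding ZD_def by simp
  have ZDe: "Z * Dk = ZD"
  proof (rule eq_matI)
    fix a c assume "a < dim_row ZD" "c < dim_col ZD"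
    then have a: "a < k" and c: "c < k" unfolding ZD_def by auto
    have "(Z * Dk) $$ (a,c) = (\<Sum>l<k. Z $$ (a,l) * Dk $$ (l,c))" by (rule mult_idx[OF cZ cDk a c])
    also have "\<dots> = (\<Sum>l<k. if l = c then xc $$ (a, N-k+c) * t (N-k+c+1) (N-k+c+1) else 0)"
      using a c by (intro sum.cong) (auto simp: Z_def Dk_def)
    also have "\<dots> = ZD $$ (a,c)" using a c by (simp add: sum_delta_lt ZD_def)
    finally show "(Z * Dk) $$ (a,c) = ZD $$ (a,c)" .
  qed (use cZ cDk cZD in auto)
  have ZDR: "mat k k (\<lambda>(a,b). A $$ (a,b)) = ZD * Rk"
  proof (rule eq_matI)
    fix a b assume "a < dim_row (ZD * Rk)" "b < dim_col (ZD * Rk)"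
    then have a: "a < k" and b: "b < k" using cZD cRk by auto
    have "(ZD * Rk) $$ (a,b) = (\<Sum>l<k. ZD $$ (a,l) * Rk $$ (l,b))" by (rule mult_idx[OF cZD cRk a b])
    also have "\<dots> = (\<Sum>l<k. if l = k - 1 - b then ZD $$ (a,l) * (-1)^b else 0)"
      using a b by (intro sum.cong) (auto simp: Rk_def)
    also have "\<dots> = ZD $$ (a, k-1-b) * (-1)^b" using b by (simp add: sum_delta_lt)
    also have "\<dots> = A $$ (a,b)"
    proof -
      have e1: "N - k + (k - 1 - b) = n - b" using b kN unfolding N_def by auto
      have e2: "N - k + (k - 1 - b) + 1 = n - b + 1" using e1 by simp
      show ?thesis using a b kN by (simp add: ZD_def Aidx e1 e2 N_def)
    qed
    finally show "mat k k (\<lambda>(a,b). A $$ (a,b)) $$ (a,b) = (ZD * Rk) $$ (a,b)" using a b by simp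
  qed (use cZD cRk in auto)
  have dRk: "det Rk = 1"
  proof -
    have W: "Wm k (k-1) = mat k k (\<lambda>(a,b). wf (k-1) a b)" by (rule Wm_formula) (use k1 in simp)
    have "Rk = transpose_mat (Wm k (k-1))"
      unfolding W Rk_def by (rule eq_matI) (auto simp: wf_def)
    then show ?thesis using det_transpose[OF Wm_carrier] det_Wm by simp
  qed
  have dDk: "det Dk = (\<Prod>c<k. t (N-k+c+1) (N-k+c+1))"
  proof -
    have "upper_triangular Dk" unfolding upper_triangular_def Dk_def by auto
    then have "det Dk = prod_list (diag_mat Dk)" using det_upper_triangular cDk by blast
    also have "diag_mat Dk = map (\<lambda>c. t (N-k+c+1) (N-k+c+1)) [0..<k]" unfolding diag_mat_def Dk_def by auto
    finally show ?thesis by (simp add: prod_list_map_upt)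
  qed
  have dZ: "det Z = (\<Prod>m'\<in>{1..N-k}. \<Prod>i<k. sc (m'+i) m')"
  proof -
    have "det Z = cm N k (Qm N sc 1) (1-1)" unfolding cm_def Z_def xc_def x_c_Qm N_def by simp
    also have "\<dots> = (\<Prod>m'\<in>{1..N-k}. \<Prod>i<k. sc (m'+i) m')"
      by (rule cm_closed[OF k1 kN, of 1 "N-k"]) auto
    finally show ?thesis .
  qed
  have hwA: "hw_coeff k A = (\<Prod>m'\<in>{1..N-k}. \<Prod>i<k. sc (m'+i) m') * (\<Prod>c<k. t (N-k+c+1) (N-k+c+1))"
    unfolding hw_coeff_def ZDR ZDe[symmetric] det_mult[OF mult_carrier_mat[OF cZ cDk] cRk] det_mult[OF cZ cDk]
    using dRk dDk dZ by simp
  have tel: "(\<Prod>m'\<in>{1..N-k}. \<Prod>i<k. sc (m'+i) m') = (\<Prod>m'\<in>{1..N-k}. t m' m' / t (m'+k) m')"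
  proof (rule prod.cong)
    fix m' assume m': "m' \<in> {1..N-k}"
    show "(\<Prod>i<k. sc (m'+i) m') = t m' m' / t (m'+k) m'"
      unfolding sc_def
    proof (rule telescope)
      fix i assume "i < k" then show "t (m'+i) m' \<noteq> 0" using m' by (intro nz) (auto simp: N_def)
    next
      show "t m' m' \<noteq> 0" using m' by (intro nz) (auto simp: N_def)
    qed
  qed simp
  have spl: "(\<Prod>i\<in>{1..n+1}. t i i) = (\<Prod>m\<in>{1..N-k}. t m m) * (\<Prod>c<k. t (N-k+c+1) (N-k+c+1))"
  proof -
    have s1: "(\<Prod>c<k. t (N-k+c+1) (N-k+c+1)) = (\<Prod>i\<in>{N-k+1..<N-k+1+k}. t i i)"
      using prod_shift[where k=k and f="\<lambda>i. t i i" and s="N-k+1"] by (simp add: add.commute add.left_commute)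
    have s2: "N-k+1+k = N+1" using kN by simp
    have "(\<Prod>i\<in>{1..n+1}. t i i) = (\<Prod>i\<in>{1..<N+1}. t i i)" unfolding N_def
      by (simp add: atLeastLessThanSuc_atLeastAtMost)
    also have "\<dots> = (\<Prod>i\<in>{1..<N-k+1}. t i i) * (\<Prod>i\<in>{N-k+1..<N+1}. t i i)"
      using kN by (intro prod.atLeastLessThan_concat[symmetric]) auto
    also have "(\<Prod>i\<in>{1..<N-k+1}. t i i) = (\<Prod>m\<in>{1..N-k}. t m m)"
      by (simp add: atLeastLessThanSuc_atLeastAtMost)
    finally show ?thesis using s1 s2 by simp
  qed
  have Seq: "{(i,j). 1 \<le> j \<and> j \<le> i \<and> i \<le> n + 1 \<and> i - j = k} = (\<lambda>m. (m+k, m)) ` {1..N-k}"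
  proof (intro equalityI subsetI)
    fix p assume "p \<in> {(i,j). 1 \<le> j \<and> j \<le> i \<and> i \<le> n + 1 \<and> i - j = k}"
    then obtain i j where p: "p = (i,j)" "1 \<le> j" "j \<le> i" "i \<le> n+1" "i - j = k" by auto
    then have "i = j + k" using k1 by auto
    then show "p \<in> (\<lambda>m. (m+k, m)) ` {1..N-k}" using p unfolding N_def by (auto intro!: image_eqI[of _ _ j])
  next
    fix p assume "p \<in> (\<lambda>m. (m+k, m)) ` {1..N-k}"
    then show "p \<in> {(i,j). 1 \<le> j \<and> j \<le> i \<and> i \<le> n + 1 \<and> i - j = k}" unfolding N_def by auto
  qed
  have inv: "(\<Prod>(i,j)\<in>{(i,j). 1 \<le> j \<and> j \<le> i \<and> i \<le> n + 1 \<and> i - j = k}. inverse (t i j))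
      = (\<Prod>m\<in>{1..N-k}. inverse (t (m+k) m))"
    unfolding Seq by (subst prod.reindex) (auto simp: inj_on_def)
  show ?thesis
    unfolding step1 hwA tel spl inv
    by (simp add: divide_inverse prod.distrib mult.assoc mult.left_commute)
qed

end
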